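(* For every $v\in\mathbb{R}$, the sets $\{\eta\in\mathcal{L}:c_\pi(\eta)\le v\}$ and $\{\eta\in\mathcal{L}:c_\pi(\eta)\ge v\}$ are compact in the topology of weak convergence.
   Context: $\pi\in(0,1)$, $\epsilon>0$, $B>0$. $\mathcal{L}=\{\eta\in\mathcal{P}(\mathbb{R}):\mathbb{E}_\eta|X|^{1+\epsilon}\le B\}$. $F_\eta(x)=\eta((-\infty,x])$, $x_\pi(\eta)=\min\{z:F_\eta(z)\ge\pi\}$, $c_\pi(\eta)=\frac{F_\eta(x_\pi(\eta))-\pi}{1-\pi}x_\pi(\eta)+\frac{1}{1-\pi}\int_{(x_\pi(\eta),\infty)}y\,dF_\eta(y)$. *)

theory Defs
  imports "HOL-Probability.Probability"
begin

definition momL :: "real \<Rightarrow> real \<Rightarrow> real measure set" where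
  "momL eps B = {\<eta>. real_distribution \<eta> \<and>
      (\<integral>\<^sup>+ x. ennreal (\<bar>x\<bar> powr (1 + eps)) \<partial>\<eta>) \<le> ennreal B}"

definition Fdist :: "real measure \<Rightarrow> real \<Rightarrow> real" where
  "Fdist \<eta> x = measure \<eta> {..x}"

definition xq :: "real \<Rightarrow> real measure \<Rightarrow> real" where
  "xq p \<eta> = (LEAST z. Fdist \<eta> z \<ge> p)"

definition cvar :: "real \<Rightarrow> real measure \<Rightarrow> real" where
  "cvar p \<eta> = (Fdist \<eta> (xq p \<eta>) - p) / (1 - p) * xq p \<eta>
      + 1 / (1 - p) * (LINT y : {xq p \<eta><..} | \<eta>. y)"

definition weakconv_topology :: "real measure topology" where
  "weakconv_topology = subtopology
     (topology_generated_by
        {{\<eta>. (\<integral>x. f x \<partial>\<eta>) \<in> U} | f U. continuous_on UNIV (f :: real \<Rightarrow> real) \<and> bounded (range f) \<and> open U})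
     {\<eta>. real_distribution \<eta>}"

end

theory Submission
  imports Defs
begin


definition gfun :: "nat \<Rightarrow> real \<Rightarrow> real" where
  "gfun n = (case (from_nat n :: rat \<times> rat) of (q, r) \<Rightarrow>
     if q < r then cts_step (of_rat q) (of_rat r) else cts_step 0 1)"

lemma cts_step_isCont: "a < b \<Longrightarrow> isCont (cts_step a b) x"
  using uniformly_continuous_imp_continuous[OF cts_step_uniformly_continuous[of a b]]
  by (simp add: continuous_on_eq_continuous_at)

lemma cts_step_bound: "\<bar>cts_step a b x\<bar> \<le> 1" if "a < b"
  using that by (auto simp: cts_step_def divide_simps)

lemma gfun_isCont: "isCont (gfun n) x"
  unfolding gfun_def by (auto split: prod.split intro!: cts_step_isCont simp: of_rat_less)

lemma gfun_bound: "\<bar>gfun n x\<bar> \<le> 1"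
  unfolding gfun_def by (auto split: prod.split intro!: cts_step_bound simp: of_rat_less)

lemma gfun_rat: assumes "q < r" obtains n where "gfun n = cts_step (of_rat q) (of_rat r)"
proof -
  have "gfun (to_nat (q,r)) = cts_step (of_rat q) (of_rat r)"
    unfolding gfun_def using assms by simp
  then show ?thesis using that by blast
qed

lemma gfun_meas[measurable]: "gfun n \<in> borel_measurable borel"
  by (intro borel_measurable_continuous_onI continuous_at_imp_continuous_on) (auto intro: gfun_isCont)

lemma rd_cdf_mono: "real_distribution M \<Longrightarrow> x \<le> y \<Longrightarrow> cdf M x \<le> cdf M y"
  using finite_borel_measure.cdf_nondecreasing real_distribution.finite_borel_measure_M by blast

lemma rat_between: "(x::real) < y \<Longrightarrow> \<exists>q::rat. x < of_rat q \<and> of_rat q < y"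
  using of_rat_dense by blast

lemma integral_gfun_conv_imp_weak_conv:
  fixes M_seq :: "nat \<Rightarrow> real measure" and M :: "real measure"
  assumes distr_M_seq [simp]: "\<And>n. real_distribution (M_seq n)"
  assumes distr_M [simp]: "real_distribution M"
  assumes conv: "\<And>n. (\<lambda>k. integral\<^sup>L (M_seq k) (gfun n)) \<longlonglongrightarrow> integral\<^sup>L M (gfun n)"
  shows "weak_conv_m M_seq M"
  unfolding weak_conv_m_def weak_conv_def
proof (clarsimp)
  interpret real_distribution M by (rule distr_M)
  have integral_conv: "(\<lambda>n. integral\<^sup>L (M_seq n) (cts_step (of_rat q) (of_rat r))) \<longlonglongrightarrow> integral\<^sup>L M (cts_step (of_rat q) (of_rat r))"
    if "q < r" for q r
    using gfun_rat[OF that] conv by metis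
  fix x assume "isCont (cdf M) x"
  hence left_cont: "continuous (at_left x) (cdf M)"
    unfolding continuous_at_split ..
  { fix y :: real assume [arith]: "x < y"
    obtain q where q: "x < of_rat q" "of_rat q < y" using rat_between \<open>x < y\<close> by blast
    obtain r where r: "(of_rat q :: real) < of_rat r" "of_rat r < y" using rat_between[of "of_rat q" y] q by auto
    have qr: "q < r" using r by (simp add: of_rat_less)
    have "limsup (\<lambda>n. cdf (M_seq n) x) \<le> limsup (\<lambda>n. integral\<^sup>L (M_seq n) (cts_step (of_rat q) (of_rat r)))"
      using q r
      by (auto intro!: Limsup_mono always_eventually order_trans[OF rd_cdf_mono real_distribution.cdf_cts_step(1)])
    also have "\<dots> = integral\<^sup>L M (cts_step (of_rat q) (of_rat r))"
      by (intro lim_imp_Limsup) (auto intro: integral_conv qr)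
    also have "\<dots> \<le> cdf M y"
      using r by (auto intro: order_trans[OF cdf_cts_step(2) cdf_nondecreasing])
    finally have "limsup (\<lambda>n. cdf (M_seq n) x) \<le> cdf M y" .
  } note * = this
  { fix y :: real assume [arith]: "x > y"
    obtain q where q: "y < of_rat q" "of_rat q < x" using rat_between \<open>x > y\<close> by blast
    obtain r where r: "(of_rat q :: real) < of_rat r" "of_rat r < x" using rat_between[of "of_rat q" x] q by auto
    have qr: "q < r" using r by (simp add: of_rat_less)
    have "cdf M y \<le> ereal (integral\<^sup>L M (cts_step (of_rat q) (of_rat r)))"
      using q r by (auto intro: order_trans[OF cdf_nondecreasing cdf_cts_step(1)])
    also have "\<dots> = liminf (\<lambda>n. integral\<^sup>L (M_seq n) (cts_step (of_rat q) (of_rat r)))"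
      by (intro lim_imp_Liminf[symmetric]) (auto intro: integral_conv qr)
    also have "\<dots> \<le> liminf (\<lambda>n. cdf (M_seq n) x)"
      using q r
      by (auto intro!: Liminf_mono always_eventually order_trans[OF real_distribution.cdf_cts_step(2) rd_cdf_mono])
    finally have "liminf (\<lambda>n. cdf (M_seq n) x) \<ge> cdf M y" .
  } note ** = this

  have "limsup (\<lambda>n. cdf (M_seq n) x) \<le> cdf M x"
  proof (rule tendsto_lowerbound)
    show "\<forall>\<^sub>F i in at_right x. limsup (\<lambda>xa. ereal (cdf (M_seq xa) x)) \<le> ereal (cdf M i)"
      by (subst eventually_at_right[of _ "x + 1"]) (auto simp: * intro: exI [of _ "x+1"])
  qed (insert cdf_is_right_cont, auto simp: continuous_within)
  moreover have "cdf M x \<le> liminf (\<lambda>n. cdf (M_seq n) x)"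
  proof (rule tendsto_upperbound)
    show "\<forall>\<^sub>F i in at_left x. ereal (cdf M i) \<le> liminf (\<lambda>xa. ereal (cdf (M_seq xa) x))"
      by (subst eventually_at_left[of "x - 1"]) (auto simp: ** intro: exI [of _ "x-1"])
  qed (insert left_cont, auto simp: continuous_within)
  ultimately show "(\<lambda>n. cdf (M_seq n) x) \<longlonglongrightarrow> cdf M x"
    by (elim limsup_le_liminf_real)
qed

lemma gfun_integrable: assumes "real_distribution M" shows "integrable M (gfun n)"
proof -
  interpret real_distribution M by fact
  show ?thesis by (rule integrable_const_bound[of _ 1]) (auto simp: gfun_bound)
qed

lemma cts_step_integrable: "real_distribution M \<Longrightarrow> a < b \<Longrightarrow> integrable M (cts_step a b)"
  using real_distribution.integrable_cts_step by blast

lemma gfun_inj: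
  assumes mu: "real_distribution \<mu>" and nu: "real_distribution \<nu>"
    and eq: "\<And>n. integral\<^sup>L \<mu> (gfun n) = integral\<^sup>L \<nu> (gfun n)"
  shows "\<mu> = \<nu>"
proof -
  have le: "cdf M1 x \<le> cdf M2 x" if M1: "real_distribution M1" and M2: "real_distribution M2"
    and eq: "\<And>n. integral\<^sup>L M1 (gfun n) = integral\<^sup>L M2 (gfun n)" for M1 M2 x
  proof -
    interpret M2: real_distribution M2 by fact
    have "cdf M1 x \<le> cdf M2 y" if "x < y" for y
    proof -
      obtain q where q: "x < of_rat q" "of_rat q < y" using rat_between \<open>x < y\<close> by blast
      obtain r where r: "(of_rat q :: real) < of_rat r" "of_rat r < y" using rat_between[of "of_rat q" y] q by auto
      have qr: "q < r" using r by (simp add: of_rat_less)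
      obtain n where n: "gfun n = cts_step (of_rat q) (of_rat r)" using gfun_rat[OF qr] by blast
      have "cdf M1 x \<le> cdf M1 (of_rat q)" using q rd_cdf_mono[OF M1] by auto
      also have "\<dots> \<le> integral\<^sup>L M1 (gfun n)" unfolding n using real_distribution.cdf_cts_step(1)[OF M1 r(1)] .
      also have "\<dots> = integral\<^sup>L M2 (gfun n)" by (rule eq)
      also have "\<dots> \<le> cdf M2 (of_rat r)" unfolding n using real_distribution.cdf_cts_step(2)[OF M2 r(1)] .
      also have "\<dots> \<le> cdf M2 y" using r rd_cdf_mono[OF M2] by auto
      finally show ?thesis .
    qed
    then show ?thesis
      using M2.cdf_is_right_cont[of x]
      by (intro tendsto_lowerbound[of "cdf M2" "cdf M2 x" "at_right x"])
         (auto simp: continuous_within eventually_at_right_less eventually_at_right[of x "x+1"] intro: exI[of _ "x+1"])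
  qed
  have "cdf \<mu> = cdf \<nu>"
    using le[OF mu nu eq] le[OF nu mu eq[symmetric]] by (intro ext antisym) auto
  then show ?thesis using cdf_unique mu nu by blast
qed

definition Phi :: "real measure \<Rightarrow> nat \<Rightarrow> real" where
  "Phi \<eta> = (\<lambda>n. integral\<^sup>L \<eta> (gfun n))"

abbreviation PM :: "real measure set" where "PM \<equiv> {\<eta>. real_distribution \<eta>}"

abbreviation WSB :: "real measure set set" where
  "WSB \<equiv> {{\<eta>. (\<integral>x. f x \<partial>\<eta>) \<in> U} | f U. continuous_on UNIV (f :: real \<Rightarrow> real) \<and> bounded (range f) \<and> open U}"

lemma topspace_weak: "topspace weakconv_topology = PM"
proof -
  have "UNIV \<in> WSB"
    by (rule CollectI, rule exI[of _ "\<lambda>_. 0"], rule exI[of _ UNIV]) auto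
  then have "\<Union>WSB = UNIV" by blast
  then show ?thesis unfolding weakconv_topology_def by simp
qed

lemma limitin_generated:
  assumes "l \<in> \<Union>Sb" "\<And>s. s \<in> Sb \<Longrightarrow> l \<in> s \<Longrightarrow> eventually (\<lambda>x. f x \<in> s) F"
  shows "limitin (topology_generated_by Sb) f l F"
  unfolding limitin_def openin_topology_generated_by_iff
proof (intro conjI allI impI)
  show "l \<in> topspace (topology_generated_by Sb)" using assms(1) by simp
  fix U assume "generate_topology_on Sb U \<and> l \<in> U"
  then have "generate_topology_on Sb U" "l \<in> U" by auto
  then show "eventually (\<lambda>x. f x \<in> U) F"
  proof (induction arbitrary: rule: generate_topology_on.induct)
    case Empty then show ?case by simp
  next
    case (Int a b) then show ?case by (auto intro: eventually_conj elim: eventually_mono)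
  next
    case (UN K)
    then obtain k where "k \<in> K" "l \<in> k" by blast
    with UN have "eventually (\<lambda>x. f x \<in> k) F" by blast
    then show ?case by (rule eventually_mono) (use \<open>k \<in> K\<close> in blast)
  next
    case (Basis s) then show ?case using assms(2) by blast
  qed
qed

lemma limitin_weak:
  assumes "\<And>k. real_distribution (\<sigma> k)" "real_distribution l" "weak_conv_m \<sigma> l"
  shows "limitin weakconv_topology \<sigma> l sequentially"
  unfolding weakconv_topology_def limitin_subtopology
proof (intro conjI)
  show "limitin (topology_generated_by WSB) \<sigma> l sequentially"
  proof (rule limitin_generated)
    have "UNIV \<in> WSB"
      by (rule CollectI, rule exI[of _ "\<lambda>_. 0"], rule exI[of _ UNIV]) auto
    then show "l \<in> \<Union>WSB" by blast
    fix s assume "s \<in> WSB" "l \<in> s"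
    then have "\<exists>f U. s = {\<eta>. (\<integral>x. f x \<partial>\<eta>) \<in> U} \<and> continuous_on UNIV (f :: real \<Rightarrow> real) \<and> bounded (range f) \<and> open U"
      by (simp only: mem_Collect_eq)
    then obtain f :: "real \<Rightarrow> real" and U where s: "s = {\<eta>. (\<integral>x. f x \<partial>\<eta>) \<in> U}" and f: "continuous_on UNIV f" "bounded (range f)" "open U"
      by blast
    obtain C where C: "\<And>x. norm (f x) \<le> C" using f(2) unfolding bounded_iff by blast
    have "(\<lambda>k. integral\<^sup>L (\<sigma> k) f) \<longlonglongrightarrow> integral\<^sup>L l f"
    proof (rule weak_conv_imp_integral_bdd_continuous_conv[OF assms, of f C])
      show "isCont f x" for x using f(1) by (simp add: continuous_on_eq_continuous_at)
      show "norm (f x) \<le> C" for x by (rule C)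
    qed
    moreover have "integral\<^sup>L l f \<in> U" using \<open>l \<in> s\<close> s by blast
    ultimately have "eventually (\<lambda>k. integral\<^sup>L (\<sigma> k) f \<in> U) sequentially"
      using f(3) topological_tendstoD by blast
    then show "eventually (\<lambda>k. \<sigma> k \<in> s) sequentially"
      unfolding s by simp
  qed
  show "l \<in> PM" using assms by simp
  show "eventually (\<lambda>k. \<sigma> k \<in> PM) sequentially" using assms by simp
qed

lemma coord_cont: "continuous_map weakconv_topology euclideanreal (\<lambda>\<eta>. integral\<^sup>L \<eta> (gfun n))"
  unfolding continuous_map_def
proof (intro conjI allI impI)
  fix U :: "real set" assume "openin euclideanreal U"
  then have U: "open U" by simp
  have "{\<eta>. integral\<^sup>L \<eta> (gfun n) \<in> U} \<in> WSB"
  proof -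
    have "continuous_on UNIV (gfun n)" using gfun_isCont by (simp add: continuous_at_imp_continuous_on)
    moreover have "bounded (range (gfun n))" unfolding bounded_iff using gfun_bound by auto
    ultimately show ?thesis using U by blast
  qed
  then have "openin (topology_generated_by WSB) {\<eta>. integral\<^sup>L \<eta> (gfun n) \<in> U}"
    by (rule topology_generated_by_Basis)
  then show "openin weakconv_topology {x \<in> topspace weakconv_topology. integral\<^sup>L x (gfun n) \<in> U}"
  proof -
    have eq: "{x \<in> topspace weakconv_topology. integral\<^sup>L x (gfun n) \<in> U} = {\<eta>. integral\<^sup>L \<eta> (gfun n) \<in> U} \<inter> PM"
      using topspace_weak by auto
    show ?thesis unfolding eq unfolding weakconv_topology_def openin_subtopology
      by (rule exI[of _ "{\<eta>. integral\<^sup>L \<eta> (gfun n) \<in> U}"], rule conjI[OF \<open>openin (topology_generated_by WSB) {\<eta>. integral\<^sup>L \<eta> (gfun n) \<in> U}\<close> refl])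
  qed
qed simp

abbreviation YT where "YT \<equiv> subtopology (powertop_real (UNIV::nat set)) (Phi ` PM)"

lemma YT_metrizable: "metrizable_space YT"
  by (intro metrizable_space_subtopology)
     (simp add: metrizable_space_product_topology metrizable_space_euclidean)

lemma Phi_cont: "continuous_map weakconv_topology YT Phi"
  by (auto simp: continuous_map_into_subtopology continuous_map_componentwise_UNIV coord_cont Phi_def[abs_def] topspace_weak)

lemma Phi_closed: "closed_map weakconv_topology YT Phi"
  unfolding closed_map_def
proof (intro allI impI)
  fix C assume C: "closedin weakconv_topology C"
  then have CPM: "C \<subseteq> PM" using closedin_subset topspace_weak by blast
  obtain M d where Md: "Metric_space M d" and YT: "YT = Metric_space.mtopology M d"
    using YT_metrizable metrizable_space_def by blast
  interpret Metric_space M d by fact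
  have "topspace YT = Phi ` PM" by simp
  then have Mtop: "M = Phi ` PM" using YT by simp
  show "closedin YT (Phi ` C)"
    unfolding YT metric_closedin_iff_sequentially_closed
  proof (intro conjI allI impI)
    show "Phi ` C \<subseteq> M" using Mtop CPM by auto
    fix \<sigma> l assume asm: "range \<sigma> \<subseteq> Phi ` C \<and> limitin mtopology \<sigma> l sequentially"
    then have "l \<in> M" using limitin_topspace by fastforce
    then obtain \<eta> where eta: "\<eta> \<in> PM" "l = Phi \<eta>" using Mtop by auto
    have "\<forall>k. \<exists>x. x \<in> C \<and> \<sigma> k = Phi x" using asm by blast
    then obtain c where c: "\<And>k. c k \<in> C" "\<And>k. \<sigma> k = Phi (c k)"
      by metis
    have lim: "limitin (powertop_real UNIV) \<sigma> l sequentially"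
      using asm unfolding YT[symmetric] limitin_subtopology by blast
    have "(\<lambda>k. integral\<^sup>L (c k) (gfun n)) \<longlonglongrightarrow> integral\<^sup>L \<eta> (gfun n)" for n
      using lim unfolding limitin_componentwise by (auto simp: c eta Phi_def)
    then have "weak_conv_m c \<eta>"
      using CPM c eta by (intro integral_gfun_conv_imp_weak_conv) auto
    then have "limitin weakconv_topology c \<eta> sequentially"
      using CPM c eta by (intro limitin_weak) auto
    then have "\<eta> \<in> C" using C c by (intro limitin_closedin) auto
    then show "l \<in> Phi ` C" using eta by auto
  qed
qed

lemma Phi_homeo: "homeomorphic_map weakconv_topology YT Phi"
proof (rule bijective_closed_imp_homeomorphic_map[OF Phi_cont Phi_closed])
  show "Phi ` topspace weakconv_topology = topspace YT" by (simp add: topspace_weak)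
  show "inj_on Phi (topspace weakconv_topology)"
    unfolding topspace_weak by (auto intro!: inj_onI gfun_inj simp: Phi_def fun_eq_iff)
qed

lemma seq_compact_weak:
  assumes SPM: "S \<subseteq> PM"
    and seq: "\<And>\<sigma> :: nat \<Rightarrow> real measure. (\<And>k. \<sigma> k \<in> S) \<Longrightarrow> \<exists>l (r :: nat \<Rightarrow> nat). l \<in> S \<and> strict_mono r \<and> weak_conv_m (\<sigma> \<circ> r) l"
  shows "compactin weakconv_topology S"
proof -
  obtain M d where Md: "Metric_space M d" and YT: "YT = Metric_space.mtopology M d"
    using YT_metrizable metrizable_space_def by blast
  interpret Metric_space M d by fact
  have "topspace YT = Phi ` PM" by simp
  then have Mtop: "M = Phi ` PM" using YT by simp
  have "compactin YT (Phi ` S)"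
    unfolding YT compactin_sequentially
  proof (intro conjI allI impI)
    show "Phi ` S \<subseteq> M" using Mtop SPM by auto
    fix \<tau> :: "nat \<Rightarrow> nat \<Rightarrow> real" assume "range \<tau> \<subseteq> Phi ` S"
    then have "\<forall>k. \<exists>x. x \<in> S \<and> \<tau> k = Phi x" by blast
    then obtain c where c: "\<And>k. c k \<in> S" "\<And>k. \<tau> k = Phi (c k)"
      by metis
    have "\<exists>l r. l \<in> S \<and> strict_mono r \<and> weak_conv_m (c \<circ> r) l" by (rule seq) (rule c(1))
    then obtain l r where lr: "l \<in> S" "strict_mono r" "weak_conv_m (c \<circ> r) l" by blast
    have conv: "(\<lambda>k. integral\<^sup>L ((c \<circ> r) k) (gfun n)) \<longlonglongrightarrow> integral\<^sup>L l (gfun n)" for n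
    proof (rule weak_conv_imp_integral_bdd_continuous_conv[of "c \<circ> r" l "gfun n" 1])
      show "real_distribution ((c \<circ> r) k)" for k using SPM c(1)[of "r k"] by auto
      show "real_distribution l" using SPM lr(1) by auto
    qed (auto simp: gfun_isCont gfun_bound lr(3))
    have "limitin YT (\<tau> \<circ> r) (Phi l) sequentially"
      unfolding limitin_subtopology limitin_componentwise
    proof (intro conjI)
      show "Phi l \<in> Phi ` PM" using lr SPM by auto
      show "\<forall>\<^sub>F x in sequentially. (\<tau> \<circ> r) x \<in> Phi ` PM"
        using c SPM by (intro always_eventually) (auto simp: o_def)
      show "Phi l \<in> extensional UNIV" by simp
      show "\<forall>\<^sub>F a in sequentially. (\<tau> \<circ> r) a \<in> topspace (powertop_real UNIV)" by simp
      show "\<forall>i\<in>UNIV. limitin euclideanreal (\<lambda>k. (\<tau> \<circ> r) k i) (Phi l i) sequentially"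
        using conv by (simp add: Phi_def c)
    qed
    then have "limitin mtopology (\<tau> \<circ> r) (Phi l) sequentially" by (simp only: YT)
    moreover have "Phi l \<in> Phi ` S" using lr by simp
    ultimately show "\<exists>l r. l \<in> Phi ` S \<and> strict_mono r \<and> limitin mtopology (\<tau> \<circ> r) l sequentially"
      using lr(2) by blast
  qed
  then show ?thesis
    using homeomorphic_map_compactness[OF Phi_homeo, of S] SPM unfolding topspace_weak by blast
qed



lemma momL_D:
  assumes "\<eta> \<in> momL eps B" "B > 0"
  shows "real_distribution \<eta>" "integrable \<eta> (\<lambda>x. \<bar>x\<bar> powr (1 + eps))"
    "(\<integral>x. \<bar>x\<bar> powr (1 + eps) \<partial>\<eta>) \<le> B"
proof -
  show rd: "real_distribution \<eta>" using assms unfolding momL_def by auto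
  interpret real_distribution \<eta> by fact
  have nn: "(\<integral>\<^sup>+ x. ennreal (\<bar>x\<bar> powr (1 + eps)) \<partial>\<eta>) \<le> ennreal B" using assms unfolding momL_def by auto
  show int: "integrable \<eta> (\<lambda>x. \<bar>x\<bar> powr (1 + eps))"
    by (rule integrableI_nonneg) (use nn in \<open>auto simp: top_unique le_less_trans[OF _ ennreal_less_top]\<close>)
  have "ennreal (\<integral>x. \<bar>x\<bar> powr (1 + eps) \<partial>\<eta>) = (\<integral>\<^sup>+ x. ennreal (\<bar>x\<bar> powr (1 + eps)) \<partial>\<eta>)"
    by (rule nn_integral_eq_integral[symmetric]) (use int in auto)
  with nn have "ennreal (\<integral>x. \<bar>x\<bar> powr (1 + eps) \<partial>\<eta>) \<le> ennreal B" by simp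
  then show "(\<integral>x. \<bar>x\<bar> powr (1 + eps) \<partial>\<eta>) \<le> B"
    using assms(2) by simp
qed

lemma abs_le_powr: "eps > 0 \<Longrightarrow> \<bar>x::real\<bar> \<le> 1 + \<bar>x\<bar> powr (1 + eps)"
proof (cases "\<bar>x\<bar> \<le> 1")
  case False
  assume "eps > 0"
  then have "\<bar>x\<bar> powr 1 \<le> \<bar>x\<bar> powr (1 + eps)" using False by (intro powr_mono) auto
  then show ?thesis using False by simp
qed (smt (verit) powr_ge_zero)

lemma momL_int_id:
  assumes "\<eta> \<in> momL eps B" "B > 0" "eps > 0"
  shows "integrable \<eta> (\<lambda>x. x)"
proof -
  interpret real_distribution \<eta> using momL_D[OF assms(1,2)] by simp
  have "integrable \<eta> (\<lambda>x. 1 + \<bar>x\<bar> powr (1 + eps))"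
    using momL_D[OF assms(1,2)] by auto
  then show ?thesis
    by (rule Bochner_Integration.integrable_bound) (use abs_le_powr[OF assms(3)] in \<open>auto simp: powr_ge_zero\<close>)
qed

definition pp :: "real \<Rightarrow> real \<Rightarrow> real" where "pp z x = max (x - z) 0"

lemma pp_meas[measurable]: "pp z \<in> borel_measurable borel"
  unfolding pp_def by measurable

lemma momL_int_pp:
  assumes "\<eta> \<in> momL eps B" "B > 0" "eps > 0"
  shows "integrable \<eta> (pp z)"
proof -
  interpret real_distribution \<eta> using momL_D[OF assms(1,2)] by simp
  have "integrable \<eta> (\<lambda>x. \<bar>z\<bar> + \<bar>x\<bar>)"
    using momL_int_id[OF assms] by auto
  then show ?thesis
    by (rule Bochner_Integration.integrable_bound) (auto simp: pp_def)
qed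

lemma markov_mom:
  assumes "\<eta> \<in> momL eps B" "B > 0" "R > 0" "eps > 0"
  shows "measure \<eta> {x. R \<le> \<bar>x\<bar>} \<le> B / R powr (1 + eps)"
proof -
  interpret real_distribution \<eta> using momL_D[OF assms(1,2)] by simp
  have int: "integrable \<eta> (\<lambda>x. \<bar>x\<bar> powr (1 + eps))" using momL_D[OF assms(1,2)] by simp
  have "measure \<eta> {x. R \<le> \<bar>x\<bar>} * R powr (1 + eps) = (\<integral>x. indicator {x. R \<le> \<bar>x\<bar>} x * R powr (1 + eps) \<partial>\<eta>)"
    by simp
  also have "\<dots> \<le> (\<integral>x. \<bar>x\<bar> powr (1 + eps) \<partial>\<eta>)"
  proof (rule integral_mono[OF _ int])
    show "integrable \<eta> (\<lambda>x. indicator {x. R \<le> \<bar>x\<bar>} x * R powr (1 + eps))"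
      by (rule integrable_const_bound[where B="R powr (1 + eps)"]) (auto simp: indicator_def)
    show "indicator {x. R \<le> \<bar>x\<bar>} x * R powr (1 + eps) \<le> \<bar>x\<bar> powr (1 + eps)" for x
      using assms(3,4) by (auto simp: indicator_def intro!: powr_mono2)
  qed
  also have "\<dots> \<le> B" using momL_D[OF assms(1,2)] by simp
  finally show ?thesis using assms(3) by (simp add: field_simps)
qed

lemma big_R:
  fixes B m eps :: real
  assumes "B > 0" "m > 0" "eps > 0"
  shows "\<exists>R>0. B / R powr (1 + eps) < m"
proof -
  define R where "R = max 1 (B / m + 1)"
  have R1: "R \<ge> 1" unfolding R_def by (rule max.cobounded1)
  have "R powr 1 \<le> R powr (1 + eps)" using R1 assms by (intro powr_mono) auto
  then have "B / m < R powr (1 + eps)" unfolding R_def using R1 by (simp add: R_def)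
  then have "B / R powr (1 + eps) < m" using assms R1
    by (simp add: divide_less_eq mult.commute pos_divide_less_eq)
  then show ?thesis using R1 by (intro exI[of _ R]) auto
qed

lemma tail_small:
  fixes B e eps :: real
  assumes "B > 0" "e > 0" "eps > 0"
  shows "\<exists>R>0. \<forall>\<eta>\<in>momL eps B. measure \<eta> {x. R \<le> \<bar>x\<bar>} < e"
proof -
  obtain R where R: "R > 0" "B / R powr (1 + eps) < e" using big_R assms by blast
  then show ?thesis using markov_mom[OF _ assms(1) R(1) assms(3)] by (intro exI[of _ R]) (auto intro: le_less_trans)
qed

lemma Fdist_cdf: "Fdist \<eta> = cdf \<eta>"
  by (simp add: Fdist_def cdf_def fun_eq_iff)

lemma xq_props:
  assumes "real_distribution \<eta>" "0 < p" "p < 1"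
  shows "p \<le> cdf \<eta> (xq p \<eta>)" "\<And>z. p \<le> cdf \<eta> z \<Longrightarrow> xq p \<eta> \<le> z"
    "measure \<eta> {..<xq p \<eta>} \<le> p"
proof -
  interpret real_distribution \<eta> by fact
  define S where "S = {z. p \<le> cdf \<eta> z}"
  have "eventually (\<lambda>z. cdf \<eta> z > p) at_top"
    using cdf_lim_at_top_prob assms(3) by (rule order_tendstoD)
  then obtain z0 where "cdf \<eta> z0 > p" unfolding eventually_at_top_linorder by blast
  then have ne: "S \<noteq> {}" unfolding S_def by (auto intro!: exI[of _ z0])
  have "eventually (\<lambda>z. cdf \<eta> z < p) at_bot"
    using cdf_lim_at_bot assms(2) by (rule order_tendstoD)
  then obtain b where b: "\<And>z. z \<le> b \<Longrightarrow> cdf \<eta> z < p" unfolding eventually_at_bot_linorder by blast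
  have bdd: "bdd_below S" unfolding S_def bdd_below_def
  proof (rule exI[of _ b], intro ballI)
    fix x assume "x \<in> {z. p \<le> cdf \<eta> z}"
    then show "b \<le> x" using b[of x] by (cases "x \<le> b") auto
  qed
  define m where "m = Inf S"
  have up: "p \<le> cdf \<eta> z" if "z > m" for z
  proof -
    have "\<exists>s\<in>S. s < z" using cInf_less_iff[OF ne bdd, of z] that unfolding m_def by simp
    then obtain s where "s \<in> S" "s < z" by blast
    then show ?thesis unfolding S_def using cdf_nondecreasing[of s z] by auto
  qed
  have pm: "p \<le> cdf \<eta> m"
  proof (rule tendsto_lowerbound[of "cdf \<eta>" "cdf \<eta> m" "at_right m"])
    show "(cdf \<eta> \<longlongrightarrow> cdf \<eta> m) (at_right m)" using cdf_is_right_cont[of m] unfolding continuous_within .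
    show "\<forall>\<^sub>F x in at_right m. p \<le> cdf \<eta> x" by (rule eventually_mono[OF eventually_at_right_less]) (rule up)
  qed simp
  have low: "m \<le> z" if "p \<le> cdf \<eta> z" for z
    unfolding m_def by (rule cInf_lower[OF _ bdd]) (simp add: S_def that)
  have xq: "xq p \<eta> = m"
    unfolding xq_def Fdist_cdf by (rule Least_equality[where P="\<lambda>z. p \<le> cdf \<eta> z", OF pm low])
  show "p \<le> cdf \<eta> (xq p \<eta>)" using pm xq by simp
  show "\<And>z. p \<le> cdf \<eta> z \<Longrightarrow> xq p \<eta> \<le> z" using low xq by simp
  have "measure \<eta> {..<m} \<le> p"
  proof (rule tendsto_upperbound[of "cdf \<eta>" _ "at_left m"])
    show "(cdf \<eta> \<longlongrightarrow> measure \<eta> {..<m}) (at_left m)" by (rule cdf_at_left)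
    have ev: "eventually (\<lambda>x. x \<in> {m - 1<..<m}) (at_left m)" by (rule eventually_at_left_real) simp
    show "\<forall>\<^sub>F x in at_left m. cdf \<eta> x \<le> p"
    proof (rule eventually_mono[OF ev])
      fix y assume "y \<in> {m - 1<..<m}"
      then have "y < m" by simp
      then show "cdf \<eta> y \<le> p" using low[of y] by linarith
    qed
  qed simp
  then show "measure \<eta> {..<xq p \<eta>} \<le> p" using xq by simp
qed

definition G :: "real \<Rightarrow> real measure \<Rightarrow> real \<Rightarrow> real" where
  "G p \<eta> z = z + (\<integral>y. pp z y \<partial>\<eta>) / (1 - p)"

lemma ind_int: "real_distribution \<eta> \<Longrightarrow> (A :: real set) \<in> sets borel \<Longrightarrow> integrable \<eta> (indicator A :: real \<Rightarrow> real)"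
proof -
  assume "real_distribution \<eta>" "A \<in> sets borel"
  then interpret real_distribution \<eta> by simp
  show ?thesis by (rule integrable_real_indicator) (use \<open>A \<in> sets borel\<close> in \<open>auto simp: less_top[symmetric]\<close>)
qed

lemma alg: "(1::real) - p \<noteq> 0 \<Longrightarrow> (F - p) / (1 - p) * x + 1 / (1 - p) * (E + x * (1 - F)) = x + E / (1 - p)"
proof -
  assume h: "(1::real) - p \<noteq> 0"
  have "(F - p) / (1 - p) * x + 1 / (1 - p) * (E + x * (1 - F)) = ((F - p) * x + (E + x * (1 - F))) / (1 - p)"
    by (simp add: add_divide_distrib)
  also have "(F - p) * x + (E + x * (1 - F)) = (1 - p) * x + E" by algebra
  also have "((1 - p) * x + E) / (1 - p) = x + E / (1 - p)" using h by (simp add: add_divide_distrib)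
  finally show ?thesis .
qed

lemma cvar_G:
  assumes "\<eta> \<in> momL eps B" "B > 0" "eps > 0" "0 < p" "p < 1"
  shows "cvar p \<eta> = G p \<eta> (xq p \<eta>)"
proof -
  have rd: "real_distribution \<eta>" using momL_D[OF assms(1,2)] by simp
  interpret real_distribution \<eta> by fact
  define x where "x = xq p \<eta>"
  have intpp: "integrable \<eta> (pp x)" using momL_int_pp[OF assms(1-3)] .
  have ii: "integrable \<eta> (indicator {x<..} :: real \<Rightarrow> real)" using ind_int[OF rd] by simp
  have pw: "indicator {x<..} y *\<^sub>R y = pp x y + x * indicator {x<..} y" for y
    by (auto simp: indicator_def pp_def)
  have "(LINT y:{x<..}|\<eta>. y) = (\<integral>y. pp x y + x * indicator {x<..} y \<partial>\<eta>)"
    unfolding set_lebesgue_integral_def pw ..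
  also have "\<dots> = (\<integral>y. pp x y \<partial>\<eta>) + x * measure \<eta> {x<..}"
    using intpp ii by simp
  also have "measure \<eta> {x<..} = 1 - cdf \<eta> x"
  proof -
    have "{x<..} = space \<eta> - {..x}" by auto
    then show ?thesis using prob_compl[of "{..x}"] by (simp add: cdf_def)
  qed
  finally have L: "(LINT y:{x<..}|\<eta>. y) = (\<integral>y. pp x y \<partial>\<eta>) + x * (1 - cdf \<eta> x)" .
  have p1: "1 - p \<noteq> 0" using assms by simp
  show ?thesis
    unfolding cvar_def G_def x_def[symmetric] L Fdist_cdf using alg[OF p1] by simp
qed

lemma G_min:
  assumes "\<eta> \<in> momL eps B" "B > 0" "eps > 0" "0 < p" "p < 1"
  shows "G p \<eta> (xq p \<eta>) \<le> G p \<eta> z"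
proof -
  have rd: "real_distribution \<eta>" using momL_D[OF assms(1,2)] by simp
  interpret real_distribution \<eta> by fact
  define x where "x = xq p \<eta>"
  have intpp: "integrable \<eta> (pp w)" for w using momL_int_pp[OF assms(1-3)] .
  have ii: "integrable \<eta> (indicator A :: real \<Rightarrow> real)" if "A \<in> sets borel" for A using ind_int[OF rd that] .
  have Fx: "p \<le> cdf \<eta> x" using xq_props(1)[OF rd assms(4,5)] x_def by simp
  have Fl: "measure \<eta> {..<x} \<le> p" using xq_props(3)[OF rd assms(4,5)] x_def by simp
  have p1: "0 < 1 - p" using assms by simp
  show ?thesis
  proof (cases "x \<le> z")
    case True
    have "(\<integral>y. pp x y - (z - x) * indicator {x<..} y \<partial>\<eta>) \<le> (\<integral>y. pp z y \<partial>\<eta>)"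
    proof (rule integral_mono)
      show "integrable \<eta> (\<lambda>y. pp x y - (z - x) * indicator {x<..} y)" using intpp ii by simp
      show "integrable \<eta> (pp z)" by (rule intpp)
    qed (use True in \<open>auto simp: pp_def indicator_def\<close>)
    moreover have "(\<integral>y. pp x y - (z - x) * indicator {x<..} y \<partial>\<eta>) = (\<integral>y. pp x y \<partial>\<eta>) - (z - x) * measure \<eta> {x<..}"
      using intpp ii by simp
    moreover have "measure \<eta> {x<..} = 1 - cdf \<eta> x"
    proof -
      have "{x<..} = space \<eta> - {..x}" by auto
      then show ?thesis using prob_compl[of "{..x}"] by (simp add: cdf_def)
    qed
    ultimately have E: "(\<integral>y. pp x y \<partial>\<eta>) - (z - x) * (1 - cdf \<eta> x) \<le> (\<integral>y. pp z y \<partial>\<eta>)" by simp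
    have "(z - x) * (1 - cdf \<eta> x) \<le> (z - x) * (1 - p)" using True Fx by (intro mult_left_mono) auto
    then have "(\<integral>y. pp x y \<partial>\<eta>) \<le> (\<integral>y. pp z y \<partial>\<eta>) + (z - x) * (1 - p)" using E by linarith
    then have "(\<integral>y. pp x y \<partial>\<eta>) / (1 - p) \<le> ((\<integral>y. pp z y \<partial>\<eta>) + (z - x) * (1 - p)) / (1 - p)"
      using p1 by (intro divide_right_mono) auto
    moreover have "((\<integral>y. pp z y \<partial>\<eta>) + (z - x) * (1 - p)) / (1 - p) = (\<integral>y. pp z y \<partial>\<eta>) / (1 - p) + (z - x)"
      using p1 by (simp add: add_divide_distrib)
    ultimately have "(\<integral>y. pp x y \<partial>\<eta>) / (1 - p) \<le> (\<integral>y. pp z y \<partial>\<eta>) / (1 - p) + (z - x)"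
      by simp
    then show ?thesis unfolding G_def x_def[symmetric] by linarith
  next
    case False
    have "(\<integral>y. pp x y + (x - z) * indicator {x..} y \<partial>\<eta>) \<le> (\<integral>y. pp z y \<partial>\<eta>)"
    proof (rule integral_mono)
      show "integrable \<eta> (\<lambda>y. pp x y + (x - z) * indicator {x..} y)" using intpp ii by simp
      show "integrable \<eta> (pp z)" by (rule intpp)
    qed (use False in \<open>auto simp: pp_def indicator_def\<close>)
    moreover have "(\<integral>y. pp x y + (x - z) * indicator {x..} y \<partial>\<eta>) = (\<integral>y. pp x y \<partial>\<eta>) + (x - z) * measure \<eta> {x..}"
      using intpp ii by simp
    moreover have "measure \<eta> {x..} = 1 - measure \<eta> {..<x}"
    proof -
      have "{x..} = space \<eta> - {..<x}" by auto
      then show ?thesis using prob_compl[of "{..<x}"] by simp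
    qed
    ultimately have E: "(\<integral>y. pp x y \<partial>\<eta>) + (x - z) * (1 - measure \<eta> {..<x}) \<le> (\<integral>y. pp z y \<partial>\<eta>)" by simp
    have "(x - z) * (1 - p) \<le> (x - z) * (1 - measure \<eta> {..<x})" using False Fl by (intro mult_left_mono) auto
    then have "(\<integral>y. pp x y \<partial>\<eta>) + (x - z) * (1 - p) \<le> (\<integral>y. pp z y \<partial>\<eta>)" using E by linarith
    then have "((\<integral>y. pp x y \<partial>\<eta>) + (x - z) * (1 - p)) / (1 - p) \<le> (\<integral>y. pp z y \<partial>\<eta>) / (1 - p)"
      using p1 by (intro divide_right_mono) auto
    moreover have "((\<integral>y. pp x y \<partial>\<eta>) + (x - z) * (1 - p)) / (1 - p) = (\<integral>y. pp x y \<partial>\<eta>) / (1 - p) + (x - z)"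
      using p1 by (simp add: add_divide_distrib)
    ultimately have "(\<integral>y. pp x y \<partial>\<eta>) / (1 - p) + (x - z) \<le> (\<integral>y. pp z y \<partial>\<eta>) / (1 - p)"
      by simp
    then show ?thesis unfolding G_def x_def[symmetric] by linarith
  qed
qed



lemma pp_cont: "isCont (pp z) y"
  unfolding pp_def by (intro continuous_intros)

lemma tail_pw:
  fixes N z y eps :: real
  assumes "N > 0" "2 * \<bar>z\<bar> \<le> N" "eps > 0"
  shows "pp z y - min (pp z y) N \<le> \<bar>y\<bar> powr (1 + eps) / (N / 2) powr eps"
proof (cases "pp z y \<le> N")
  case True
  then show ?thesis by (simp add: powr_ge_zero)
next
  case False
  then have yz: "y - z > N" using assms unfolding pp_def by auto
  then have y: "y \<ge> N / 2" using assms by auto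
  then have ypos: "y > 0" using assms by auto
  have "pp z y - min (pp z y) N \<le> y" using yz y False assms unfolding pp_def by auto
  also have "y = y * (N / 2) powr eps / (N / 2) powr eps" using assms by simp
  also have "y * (N / 2) powr eps \<le> y * y powr eps"
    using y assms ypos by (intro mult_left_mono powr_mono2) auto
  also have "y * y powr eps = \<bar>y\<bar> powr (1 + eps)" using ypos by (simp add: powr_add)
  finally show ?thesis using assms by (simp add: divide_right_mono)
qed

lemma tail_int:
  assumes "\<eta> \<in> momL eps B" "B > 0" "eps > 0" "N > 0" "2 * \<bar>z\<bar> \<le> N"
  shows "\<bar>(\<integral>y. pp z y \<partial>\<eta>) - (\<integral>y. min (pp z y) N \<partial>\<eta>)\<bar> \<le> B / (N / 2) powr eps"
proof -
  have rd: "real_distribution \<eta>" using momL_D[OF assms(1,2)] by simp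
  interpret real_distribution \<eta> by fact
  have i1: "integrable \<eta> (pp z)" using momL_int_pp[OF assms(1-3)] .
  have i2: "integrable \<eta> (\<lambda>y. min (pp z y) N)"
    by (rule integrable_const_bound[where B=N]) (use assms(4) in \<open>auto simp: pp_def\<close>)
  have i3: "integrable \<eta> (\<lambda>x. \<bar>x\<bar> powr (1 + eps))" using momL_D[OF assms(1,2)] by simp
  have "(\<integral>y. pp z y \<partial>\<eta>) - (\<integral>y. min (pp z y) N \<partial>\<eta>) = (\<integral>y. pp z y - min (pp z y) N \<partial>\<eta>)"
    using i1 i2 by simp
  also have "\<dots> \<le> (\<integral>y. \<bar>y\<bar> powr (1 + eps) / (N / 2) powr eps \<partial>\<eta>)"
    by (rule integral_mono) (use i1 i2 i3 tail_pw[OF assms(4,5,3)] in auto)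
  also have "\<dots> = (\<integral>y. \<bar>y\<bar> powr (1 + eps) \<partial>\<eta>) / (N / 2) powr eps" by simp
  also have "\<dots> \<le> B / (N / 2) powr eps"
    using momL_D(3)[OF assms(1,2)] assms by (intro divide_right_mono) auto
  finally have A: "(\<integral>y. pp z y \<partial>\<eta>) - (\<integral>y. min (pp z y) N \<partial>\<eta>) \<le> B / (N / 2) powr eps" .
  have "(\<integral>y. min (pp z y) N \<partial>\<eta>) \<le> (\<integral>y. pp z y \<partial>\<eta>)"
    by (rule integral_mono) (use i1 i2 in auto)
  then show ?thesis using A by linarith
qed

lemma big_N:
  fixes B r eps z :: real
  assumes "B > 0" "r > 0" "eps > 0"
  shows "\<exists>N>0. 2 * \<bar>z\<bar> \<le> N \<and> B / (N / 2) powr eps < r"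
proof -
  define K where "K = max (\<bar>z\<bar> + 1) ((B / r + 1) powr (1 / eps))"
  have K1: "K \<ge> \<bar>z\<bar> + 1" unfolding K_def by (rule max.cobounded1)
  have K2: "K \<ge> (B / r + 1) powr (1 / eps)" unfolding K_def by (rule max.cobounded2)
  have Kpos: "K > 0" using K1 by linarith
  have "B / r + 1 = ((B / r + 1) powr (1 / eps)) powr eps"
    using assms by (simp add: powr_powr)
  also have "\<dots> \<le> K powr eps" using K2 assms by (intro powr_mono2) auto
  finally have "B / r < K powr eps" by linarith
  then have "B / K powr eps < r" using assms Kpos
    by (simp add: divide_less_eq mult.commute pos_divide_less_eq)
  then show ?thesis using K1 Kpos by (intro exI[of _ "2 * K"]) auto
qed

lemma conv_pp:
  assumes s: "\<And>k. \<sigma> k \<in> momL eps B" and m: "\<mu> \<in> momL eps B" and B: "B > 0" and e: "eps > 0"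
    and w: "weak_conv_m \<sigma> \<mu>"
  shows "(\<lambda>k. \<integral>y. pp z y \<partial>\<sigma> k) \<longlonglongrightarrow> (\<integral>y. pp z y \<partial>\<mu>)"
proof (rule LIMSEQ_I)
  fix r :: real assume r: "r > 0"
  obtain N where N: "N > 0" "2 * \<bar>z\<bar> \<le> N" "B / (N / 2) powr eps < r / 3"
    using big_N[OF B _ e, of "r / 3" z] r by auto
  have rds: "real_distribution (\<sigma> k)" for k using momL_D[OF s B] by simp
  have rdm: "real_distribution \<mu>" using momL_D[OF m B] by simp
  have "(\<lambda>k. \<integral>y. min (pp z y) N \<partial>\<sigma> k) \<longlonglongrightarrow> (\<integral>y. min (pp z y) N \<partial>\<mu>)"
  proof (rule weak_conv_imp_integral_bdd_continuous_conv[OF rds rdm w, where B=N])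
    show "isCont (\<lambda>y. min (pp z y) N) x" for x using pp_cont by (intro continuous_intros) auto
    show "norm (min (pp z y) N) \<le> N" for y using N by (auto simp: pp_def)
  qed
  then obtain no where no: "\<And>n. n \<ge> no \<Longrightarrow> norm ((\<integral>y. min (pp z y) N \<partial>\<sigma> n) - (\<integral>y. min (pp z y) N \<partial>\<mu>)) < r / 3"
    using LIMSEQ_D[of _ _ "r/3"] r by (metis zero_less_divide_iff zero_less_numeral)
  show "\<exists>no. \<forall>n\<ge>no. norm ((\<integral>y. pp z y \<partial>\<sigma> n) - (\<integral>y. pp z y \<partial>\<mu>)) < r"
  proof (intro exI allI impI)
    fix n assume "n \<ge> no"
    have a: "\<bar>(\<integral>y. pp z y \<partial>\<sigma> n) - (\<integral>y. min (pp z y) N \<partial>\<sigma> n)\<bar> < r / 3"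
      using tail_int[OF s B e N(1,2)] N(3) by (rule le_less_trans)
    have b: "\<bar>(\<integral>y. pp z y \<partial>\<mu>) - (\<integral>y. min (pp z y) N \<partial>\<mu>)\<bar> < r / 3"
      using tail_int[OF m B e N(1,2)] N(3) by (rule le_less_trans)
    have c: "\<bar>(\<integral>y. min (pp z y) N \<partial>\<sigma> n) - (\<integral>y. min (pp z y) N \<partial>\<mu>)\<bar> < r / 3"
      using no[OF \<open>n \<ge> no\<close>] by simp
    show "norm ((\<integral>y. pp z y \<partial>\<sigma> n) - (\<integral>y. pp z y \<partial>\<mu>)) < r"
      using a b c unfolding abs_less_iff real_norm_def by linarith
  qed
qed

lemma lip_pp:
  assumes "\<eta> \<in> momL eps B" "B > 0" "eps > 0"
  shows "\<bar>(\<integral>y. pp z y \<partial>\<eta>) - (\<integral>y. pp z' y \<partial>\<eta>)\<bar> \<le> \<bar>z - z'\<bar>"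
proof -
  have rd: "real_distribution \<eta>" using momL_D[OF assms(1,2)] by simp
  interpret real_distribution \<eta> by fact
  have i: "integrable \<eta> (pp w)" for w using momL_int_pp[OF assms] .
  have eq: "(\<integral>y. pp z y \<partial>\<eta>) - (\<integral>y. pp z' y \<partial>\<eta>) = (\<integral>y. pp z y - pp z' y \<partial>\<eta>)" using i by simp
  have pu: "prob UNIV = 1" using prob_space by simp
  have idiff: "integrable \<eta> (\<lambda>y. pp z y - pp z' y)" using i by simp
  have ic: "integrable \<eta> (\<lambda>y. c)" for c :: real by simp
  have "(\<integral>y. pp z y - pp z' y \<partial>\<eta>) \<le> (\<integral>y. \<bar>z - z'\<bar> \<partial>\<eta>)"
    by (rule integral_mono[OF idiff ic]) (auto simp: pp_def)
  moreover have "(\<integral>y. - \<bar>z - z'\<bar> \<partial>\<eta>) \<le> (\<integral>y. pp z y - pp z' y \<partial>\<eta>)"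
    by (rule integral_mono[OF ic idiff]) (auto simp: pp_def)
  ultimately show ?thesis using eq pu by simp
qed



lemma momL_closed:
  assumes s: "\<And>k. \<sigma> k \<in> momL eps B" and rdm: "real_distribution \<mu>" and B: "B > 0"
    and w: "weak_conv_m \<sigma> \<mu>" and e: "eps > 0"
  shows "\<mu> \<in> momL eps B"
proof -
  have rds: "real_distribution (\<sigma> k)" for k using momL_D[OF s B] by simp
  obtain \<Omega> :: "real measure" and Ys :: "nat \<Rightarrow> real \<Rightarrow> real" and Y :: "real \<Rightarrow> real" where ps: "prob_space \<Omega>" and Ysm: "\<And>n. Ys n \<in> measurable \<Omega> borel"
    and dYs: "\<And>n. distr \<Omega> borel (Ys n) = \<sigma> n" and Ym: "Y \<in> measurable \<Omega> lborel"
    and dY: "distr \<Omega> borel Y = \<mu>" and cv: "\<And>x. x \<in> space \<Omega> \<Longrightarrow> (\<lambda>n. Ys n x) \<longlonglongrightarrow> Y x"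
    using Skorohod[OF rds rdm w] by blast
  have Ym': "Y \<in> borel_measurable \<Omega>" using Ym by (simp add: measurable_cong_sets[OF refl sets_lborel])
  define f where "f x = ennreal (\<bar>x\<bar> powr (1 + eps))" for x :: real
  have fm[measurable]: "f \<in> borel_measurable borel" unfolding f_def by measurable
  have fc: "isCont f x" for x
  proof -
    have "((\<lambda>x. \<bar>x\<bar> powr (1 + eps)) \<longlongrightarrow> \<bar>x\<bar> powr (1 + eps)) (at x)"
      by (rule tendsto_powr') (use e in \<open>auto intro!: tendsto_intros\<close>)
    then show ?thesis unfolding f_def isCont_def by (rule tendsto_ennrealI)
  qed
  have "(\<integral>\<^sup>+ x. f x \<partial>\<mu>) = (\<integral>\<^sup>+ w. f (Y w) \<partial>\<Omega>)"
    unfolding dY[symmetric] by (rule nn_integral_distr[OF Ym']) simp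
  also have "\<dots> = (\<integral>\<^sup>+ w. liminf (\<lambda>n. f (Ys n w)) \<partial>\<Omega>)"
  proof (rule nn_integral_cong)
    fix w assume "w \<in> space \<Omega>"
    then have "(\<lambda>n. f (Ys n w)) \<longlonglongrightarrow> f (Y w)" using cv fc isCont_tendsto_compose by blast
    then show "f (Y w) = liminf (\<lambda>n. f (Ys n w))" by (simp add: lim_imp_Liminf)
  qed
  also have "\<dots> \<le> liminf (\<lambda>n. \<integral>\<^sup>+ w. f (Ys n w) \<partial>\<Omega>)"
    by (rule nn_integral_liminf) (use Ysm in simp)
  also have "\<dots> = liminf (\<lambda>n. \<integral>\<^sup>+ x. f x \<partial>\<sigma> n)"
  proof -
    have "(\<integral>\<^sup>+ w. f (Ys n w) \<partial>\<Omega>) = (\<integral>\<^sup>+ x. f x \<partial>\<sigma> n)" for n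
      unfolding dYs[symmetric] by (rule nn_integral_distr[symmetric, OF Ysm]) simp
    then show ?thesis by simp
  qed
  also have "\<dots> \<le> ennreal B"
    by (rule Liminf_le) (use s in \<open>auto simp: momL_def f_def\<close>)
  finally show ?thesis using rdm unfolding momL_def f_def by simp
qed

lemma tight_momL:
  assumes s: "\<And>k. \<sigma> k \<in> momL eps B" and B: "B > 0" and e: "eps > 0"
  shows "tight \<sigma>"
  unfolding tight_def
proof (intro conjI allI impI)
  show "real_distribution (\<sigma> n)" for n using momL_D[OF s B] by simp
  fix e0 :: real assume "e0 > 0"
  obtain R where R: "R > 0" "\<And>\<eta>. \<eta> \<in> momL eps B \<Longrightarrow> measure \<eta> {x. R \<le> \<bar>x\<bar>} < e0"
    using tail_small[OF B \<open>e0 > 0\<close> e] by blast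
  have "measure (\<sigma> n) {- R<..R} > 1 - e0" for n
  proof -
    interpret real_distribution "\<sigma> n" using momL_D[OF s B] by simp
    have A: "{x::real. R \<le> \<bar>x\<bar>} \<in> sets borel" by measurable
    have "1 - measure (\<sigma> n) {x. R \<le> \<bar>x\<bar>} = measure (\<sigma> n) (space (\<sigma> n) - {x. R \<le> \<bar>x\<bar>})"
      using prob_compl[of "{x. R \<le> \<bar>x\<bar>}"] A by simp
    also have "\<dots> \<le> measure (\<sigma> n) {- R<..R}"
      by (rule finite_measure_mono) auto
    finally show ?thesis using R(2)[OF s[of n]] by linarith
  qed
  then show "\<exists>a b. a < b \<and> (\<forall>n. 1 - e0 < measure (\<sigma> n) {a<..b})"
    using R(1) by (intro exI[of _ "-R"] exI[of _ R]) auto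
qed

lemma xq_bound:
  assumes B: "B > 0" and e: "eps > 0" and p: "0 < p" "p < 1"
  shows "\<exists>R. \<forall>\<eta>\<in>momL eps B. \<bar>xq p \<eta>\<bar> \<le> R"
proof -
  obtain R where R: "R > 0" "\<And>\<eta>. \<eta> \<in> momL eps B \<Longrightarrow> measure \<eta> {x. R \<le> \<bar>x\<bar>} < min p (1 - p)"
    using tail_small[OF B _ e, of "min p (1 - p)"] p by auto
  have "\<bar>xq p \<eta>\<bar> \<le> R" if m: "\<eta> \<in> momL eps B" for \<eta>
  proof -
    have rd: "real_distribution \<eta>" using momL_D[OF m B] by simp
    interpret real_distribution \<eta> by fact
    have A: "{x::real. R \<le> \<bar>x\<bar>} \<in> sets borel" by measurable
    have "1 - measure \<eta> {x. R \<le> \<bar>x\<bar>} = measure \<eta> (space \<eta> - {x. R \<le> \<bar>x\<bar>})"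
      using prob_compl[of "{x. R \<le> \<bar>x\<bar>}"] A by simp
    also have "\<dots> \<le> measure \<eta> {..R}"
      by (rule finite_measure_mono) auto
    finally have "p \<le> cdf \<eta> R" using R(2)[OF m] by (simp add: cdf_def)
    then have up: "xq p \<eta> \<le> R" using xq_props(2)[OF rd p] by blast
    have "\<not> xq p \<eta> < - R"
    proof
      assume "xq p \<eta> < - R"
      then have "measure \<eta> {..xq p \<eta>} \<le> measure \<eta> {x. R \<le> \<bar>x\<bar>}"
        using A by (intro finite_measure_mono) auto
      then have "cdf \<eta> (xq p \<eta>) < p" using R(2)[OF m] by (simp add: cdf_def)
      then show False using xq_props(1)[OF rd p] by simp
    qed
    then show ?thesis using up by simp
  qed
  then show ?thesis by blast
qed

lemma G_conv:
  assumes s: "\<And>k. \<sigma> k \<in> momL eps B" and m: "\<mu> \<in> momL eps B" and B: "B > 0" and e: "eps > 0"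
    and w: "weak_conv_m \<sigma> \<mu>" and p: "p < 1"
  shows "(\<lambda>k. G p (\<sigma> k) z) \<longlonglongrightarrow> G p \<mu> z"
  unfolding G_def using p by (intro tendsto_intros conv_pp[OF s m B e w]) auto

lemma G_lip:
  assumes "\<eta> \<in> momL eps B" "B > 0" "eps > 0" "p < 1"
  shows "\<bar>G p \<eta> z - G p \<eta> z'\<bar> \<le> (1 + 1 / (1 - p)) * \<bar>z - z'\<bar>"
proof -
  have l: "\<bar>(\<integral>y. pp z y \<partial>\<eta>) - (\<integral>y. pp z' y \<partial>\<eta>)\<bar> \<le> \<bar>z - z'\<bar>" by (rule lip_pp[OF assms(1-3)])
  have p1: "1 - p > 0" using assms by simp
  have "G p \<eta> z - G p \<eta> z' = (z - z') + ((\<integral>y. pp z y \<partial>\<eta>) - (\<integral>y. pp z' y \<partial>\<eta>)) / (1 - p)"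
    unfolding G_def by (simp add: diff_divide_distrib)
  also have "\<bar>\<dots>\<bar> \<le> \<bar>z - z'\<bar> + \<bar>(\<integral>y. pp z y \<partial>\<eta>) - (\<integral>y. pp z' y \<partial>\<eta>)\<bar> / (1 - p)"
    using p1 by (simp add: abs_triangle_ineq[THEN order_trans] abs_divide)
  also have "\<dots> \<le> \<bar>z - z'\<bar> + \<bar>z - z'\<bar> / (1 - p)"
    using l p1 by (simp add: divide_right_mono)
  finally show ?thesis by (simp add: algebra_simps)
qed



lemma cvar_usc:
  assumes s: "\<And>k. \<sigma> k \<in> momL eps B" and m: "\<mu> \<in> momL eps B" and B: "B > 0" and e: "eps > 0"
    and w: "weak_conv_m \<sigma> \<mu>" and p: "0 < p" "p < 1" and v: "\<And>k. v \<le> cvar p (\<sigma> k)"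
  shows "v \<le> cvar p \<mu>"
proof -
  define x where "x = xq p \<mu>"
  have "(\<lambda>k. G p (\<sigma> k) x) \<longlonglongrightarrow> G p \<mu> x" by (rule G_conv[OF s m B e w p(2)])
  moreover have "v \<le> G p (\<sigma> k) x" for k
  proof -
    have c: "cvar p (\<sigma> k) = G p (\<sigma> k) (xq p (\<sigma> k))" by (rule cvar_G[OF s B e p])
    have g: "G p (\<sigma> k) (xq p (\<sigma> k)) \<le> G p (\<sigma> k) x" by (rule G_min[OF s B e p])
    show ?thesis using v[of k] c g by linarith
  qed
  ultimately have "v \<le> G p \<mu> x" by (intro LIMSEQ_le_const) auto
  moreover have "cvar p \<mu> = G p \<mu> x" unfolding x_def by (rule cvar_G[OF m B e p])
  ultimately show ?thesis by simp
qed

lemma cvar_lsc: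
  assumes s: "\<And>k. \<sigma> k \<in> momL eps B" and m: "\<mu> \<in> momL eps B" and B: "B > 0" and e: "eps > 0"
    and w: "weak_conv_m \<sigma> \<mu>" and p: "0 < p" "p < 1" and v: "\<And>k. cvar p (\<sigma> k) \<le> v"
  shows "cvar p \<mu> \<le> v"
proof -
  define z where "z k = xq p (\<sigma> k)" for k
  obtain R where R: "\<And>\<eta>. \<eta> \<in> momL eps B \<Longrightarrow> \<bar>xq p \<eta>\<bar> \<le> R" using xq_bound[OF B e p] by blast
  have "bounded (range z)" unfolding bounded_iff z_def using R[OF s] by auto
  then obtain zs r where r: "strict_mono r" and zs: "(z \<circ> r) \<longlonglongrightarrow> zs"
    using bounded_imp_convergent_subsequence by blast
  have s': "\<And>k. (\<sigma> \<circ> r) k \<in> momL eps B" using s by simp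
  have w': "weak_conv_m (\<sigma> \<circ> r) \<mu>"
    unfolding weak_conv_m_def weak_conv_def
  proof (intro allI impI)
    fix x assume "isCont (cdf \<mu>) x"
    then have "(\<lambda>n. cdf (\<sigma> n) x) \<longlonglongrightarrow> cdf \<mu> x" using w unfolding weak_conv_m_def weak_conv_def by blast
    from LIMSEQ_subseq_LIMSEQ[OF this r] show "(\<lambda>n. cdf ((\<sigma> \<circ> r) n) x) \<longlonglongrightarrow> cdf \<mu> x" by (simp add: o_def)
  qed
  define L where "L = 1 + 1 / (1 - p)"
  have d0: "(\<lambda>k. G p (\<sigma> (r k)) (z (r k)) - G p (\<sigma> (r k)) zs) \<longlonglongrightarrow> 0"
  proof (rule Lim_null_comparison)
    show "\<forall>\<^sub>F k in sequentially. norm (G p (\<sigma> (r k)) (z (r k)) - G p (\<sigma> (r k)) zs) \<le> L * \<bar>z (r k) - zs\<bar>"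
      by (rule always_eventually, rule allI) (use G_lip[OF s B e p(2)] in \<open>simp only: real_norm_def L_def\<close>)
    have "(\<lambda>k. z (r k) - zs) \<longlonglongrightarrow> 0" using zs by (simp add: o_def LIM_zero)
    then have "(\<lambda>k. \<bar>z (r k) - zs\<bar>) \<longlonglongrightarrow> 0" by (rule tendsto_rabs_zero)
    then show "(\<lambda>k. L * \<bar>z (r k) - zs\<bar>) \<longlonglongrightarrow> 0" by (rule tendsto_mult_right_zero)
  qed
  have g: "(\<lambda>k. G p (\<sigma> (r k)) zs) \<longlonglongrightarrow> G p \<mu> zs"
    using G_conv[OF s' m B e w' p(2)] by (simp add: o_def)
  have "(\<lambda>k. (G p (\<sigma> (r k)) (z (r k)) - G p (\<sigma> (r k)) zs) + G p (\<sigma> (r k)) zs) \<longlonglongrightarrow> 0 + G p \<mu> zs"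
    by (rule tendsto_add[OF d0 g])
  then have lim: "(\<lambda>k. G p (\<sigma> (r k)) (z (r k))) \<longlonglongrightarrow> G p \<mu> zs" by simp
  have "G p (\<sigma> (r k)) (z (r k)) \<le> v" for k
  proof -
    have c: "cvar p (\<sigma> (r k)) = G p (\<sigma> (r k)) (xq p (\<sigma> (r k)))" by (rule cvar_G[OF s B e p])
    show ?thesis using v[of "r k"] c unfolding z_def by linarith
  qed
  then have "G p \<mu> zs \<le> v" using lim by (intro LIMSEQ_le_const2) auto
  moreover have "cvar p \<mu> = G p \<mu> (xq p \<mu>)" by (rule cvar_G[OF m B e p])
  moreover have "G p \<mu> (xq p \<mu>) \<le> G p \<mu> zs" by (rule G_min[OF m B e p])
  ultimately show ?thesis by linarith
qed

theorem lemma7: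
  fixes p eps B v :: real
  assumes "0 < p" "p < 1" "eps > 0" "B > 0"
  shows "compactin weakconv_topology {\<eta> \<in> momL eps B. cvar p \<eta> \<le> v}
       \<and> compactin weakconv_topology {\<eta> \<in> momL eps B. cvar p \<eta> \<ge> v}"
proof
  have p: "0 < p" "p < 1" and e: "eps > 0" and B: "B > 0" using assms by auto
  show "compactin weakconv_topology {\<eta> \<in> momL eps B. cvar p \<eta> \<le> v}"
  proof (rule seq_compact_weak)
    show "{\<eta> \<in> momL eps B. cvar p \<eta> \<le> v} \<subseteq> PM" using momL_D[OF _ B] by auto
    fix \<sigma> :: "nat \<Rightarrow> real measure" assume sS: "\<And>k. \<sigma> k \<in> {\<eta> \<in> momL eps B. cvar p \<eta> \<le> v}"
    then have s: "\<And>k. \<sigma> k \<in> momL eps B" and sv: "\<And>k. cvar p (\<sigma> k) \<le> v" by auto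
    obtain r M where r: "strict_mono (r :: nat \<Rightarrow> nat)" and M: "real_distribution M" and w: "weak_conv_m (\<sigma> \<circ> id \<circ> r) M"
    proof -
      have "strict_mono (id :: nat \<Rightarrow> nat)" by (simp add: strict_mono_def)
      from tight_imp_convergent_subsubsequence[OF tight_momL[of \<sigma> eps B, OF s B e] this] show thesis
        by (elim exE conjE) (rule that)
    qed
    have w': "weak_conv_m (\<sigma> \<circ> r) M" using w by simp
    have s': "\<And>k. (\<sigma> \<circ> r) k \<in> momL eps B" using s by simp
    have Mm: "M \<in> momL eps B" by (rule momL_closed[OF s' M B w' e])
    have "cvar p M \<le> v" by (rule cvar_lsc[OF s' Mm B e w' p]) (simp add: sv)
    then show "\<exists>l r. l \<in> {\<eta> \<in> momL eps B. cvar p \<eta> \<le> v} \<and> strict_mono r \<and> weak_conv_m (\<sigma> \<circ> r) l"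
      using Mm r w' by (intro exI[of _ M] exI[of _ r]) simp
  qed
  show "compactin weakconv_topology {\<eta> \<in> momL eps B. cvar p \<eta> \<ge> v}"
  proof (rule seq_compact_weak)
    show "{\<eta> \<in> momL eps B. cvar p \<eta> \<ge> v} \<subseteq> PM" using momL_D[OF _ B] by auto
    fix \<sigma> :: "nat \<Rightarrow> real measure" assume sS: "\<And>k. \<sigma> k \<in> {\<eta> \<in> momL eps B. cvar p \<eta> \<ge> v}"
    then have s: "\<And>k. \<sigma> k \<in> momL eps B" and sv: "\<And>k. v \<le> cvar p (\<sigma> k)" by auto
    obtain r M where r: "strict_mono (r :: nat \<Rightarrow> nat)" and M: "real_distribution M" and w: "weak_conv_m (\<sigma> \<circ> id \<circ> r) M"
    proof -
      have "strict_mono (id :: nat \<Rightarrow> nat)" by (simp add: strict_mono_def)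
      from tight_imp_convergent_subsubsequence[OF tight_momL[of \<sigma> eps B, OF s B e] this] show thesis
        by (elim exE conjE) (rule that)
    qed
    have w': "weak_conv_m (\<sigma> \<circ> r) M" using w by simp
    have s': "\<And>k. (\<sigma> \<circ> r) k \<in> momL eps B" using s by simp
    have Mm: "M \<in> momL eps B" by (rule momL_closed[OF s' M B w' e])
    have "v \<le> cvar p M" by (rule cvar_usc[OF s' Mm B e w' p]) (simp add: sv)
    then show "\<exists>l r. l \<in> {\<eta> \<in> momL eps B. cvar p \<eta> \<ge> v} \<and> strict_mono r \<and> weak_conv_m (\<sigma> \<circ> r) l"
      using Mm r w' by (intro exI[of _ M] exI[of _ r]) simp
  qed
qed

end
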